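(* Almost surely under the annealed law $\mathbb{P}$, $$\frac1t\,[Y]_t\longrightarrow \eta^2\qquad(t\to\infty),$$ where $([Y]_t)_{ij}=\sum_{0\le r<t}(Y^i_{r+1}-Y^i_r)(Y^j_{r+1}-Y^j_r)$ and $(\eta^2)_{ij}=\sum_{u\in\mathbb{Z}^n}(u_i-b_i)(u_j-b_j)\bar P(u)$.
   Context: Let $\mathbb{S}$ be a finite set and $\pi$ a probability measure on $\mathbb{S}$. The environment $\xi=\{\xi_t(x): x\in\mathbb{Z}^n, t\in\mathbb{Z}^+\}$ consists of i.i.d. $\mathbb{S}$-valued random variables with law $\pi$; $\Pi$ denotes its law. Let $P_0$ be a probability distribution on $\mathbb{Z}^n$ and $c:\mathbb{Z}^n\times\mathbb{S}\to\mathbb{R}$ such that: $0\le P_0(u)+c(u,s)\le 1$ for all $u,s$; $\sum_{u}c(u,s)=0$ for all $s$; $\sum_{s}c(u,s)\pi(s)=0$ for all $u$; $P_0$ and $c$ have bounded range; and there is $b^c\in\mathbb{R}^n$ with $\sum_u u\,c(u,s)=b^c$ for all $s$. Given $\xi$, $(X_t)$ is the Markov chain on $\mathbb{Z}^n$ (from a fixed starting point) with $\mathbb{P}(X_{t+1}=y\mid X_t=x,\xi)=P_0(y-x)+c(y-x,\xi_t(x))$; $\mathbb{P}_\xi$ denotes this quenched law and $\mathbb{P}=\int\mathbb{P}_\xi\,\Pi(d\xi)$ the annealed (joint) law. Let $\bar P(u)=P_0(u)+\sum_s\pi(s)c(u,s)$, $b^0=\sum_u uP_0(u)$, $b=b^0+b^c$,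 $Y_t=X_t-tb$. *)

theory Defs
  imports "HOL-Probability.Probability"
begin

text \<open>Lattice points of Z^n are modelled as int^'n, with 'n a finite index type (n = CARD('n)).
  The real embedding of a lattice point:\<close>
definition rvec :: "int ^ 'n \<Rightarrow> real ^ 'n" where
  "rvec u = (\<chi> i. real_of_int (u $ i))"

definition Pbar :: "'s::finite pmf \<Rightarrow> (int ^ 'n \<Rightarrow> real) \<Rightarrow> (int ^ 'n \<Rightarrow> 's \<Rightarrow> real)
    \<Rightarrow> int ^ 'n \<Rightarrow> real" where
  "Pbar \<pi> P0 c u = P0 u + (\<Sum>s\<in>UNIV. pmf \<pi> s * c u s)"

definition quad_var :: "(nat \<Rightarrow> real ^ 'n) \<Rightarrow> nat \<Rightarrow> real ^ 'n ^ 'n" where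
  "quad_var Y t = (\<chi> i j. \<Sum>r<t. (Y (Suc r) $ i - Y r $ i) * (Y (Suc r) $ j - Y r $ j))"

text \<open>eta^2_{ij} = sum_{u in Z^n} (u_i - b_i)(u_j - b_j) Pbar(u); the sum is taken over a finite set
  R outside of which Pbar vanishes (bounded range).\<close>
definition eta2 :: "(int ^ 'n) set \<Rightarrow> (int ^ 'n \<Rightarrow> real) \<Rightarrow> real ^ 'n \<Rightarrow> real ^ 'n ^ 'n" where
  "eta2 R Pb b = (\<chi> i j. \<Sum>u\<in>R. (rvec u $ i - b $ i) * (rvec u $ j - b $ j) * Pb u)"

end

theory Submission
  imports Defs
begin

locale walk = prob_space M
  for M :: "'w measure" +
  fixes \<pi> :: "'s::finite pmf"
    and P0 :: "int ^ 'n \<Rightarrow> real"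
    and c :: "int ^ 'n \<Rightarrow> 's \<Rightarrow> real"
    and R :: "(int ^ 'n) set"
    and bc :: "real ^ 'n"
    and x0 :: "int ^ 'n"
    and \<xi> :: "'w \<Rightarrow> nat \<Rightarrow> int ^ 'n \<Rightarrow> 's"
    and X :: "'w \<Rightarrow> nat \<Rightarrow> int ^ 'n"
  assumes R_fin: "finite R"
    and P0_supp: "\<And>u. u \<notin> R \<Longrightarrow> P0 u = 0"
    and c_supp: "\<And>u s. u \<notin> R \<Longrightarrow> c u s = 0"
    and P0_nonneg: "\<And>u. P0 u \<ge> 0"
    and P0_sum: "(\<Sum>u\<in>R. P0 u) = 1"
    and kernel_bounds: "\<And>u s. 0 \<le> P0 u + c u s \<and> P0 u + c u s \<le> 1"
    and c_sum: "\<And>s. (\<Sum>u\<in>R. c u s) = 0"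
    and c_mean: "\<And>u. (\<Sum>s\<in>UNIV. c u s * pmf \<pi> s) = 0"
    and c_drift: "\<And>s. (\<Sum>u\<in>R. c u s *\<^sub>R rvec u) = bc"
    and \<xi>_meas: "\<And>t x. (\<lambda>\<omega>. \<xi> \<omega> t x) \<in> measurable M (count_space UNIV)"
    and X_meas: "\<And>t. (\<lambda>\<omega>. X \<omega> t) \<in> measurable M (count_space UNIV)"
    and annealed_law:
      "\<And>(F :: (nat \<times> (int ^ 'n)) set) (\<sigma> :: nat \<times> (int ^ 'n) \<Rightarrow> 's) (t :: nat) (xs :: nat \<Rightarrow> int ^ 'n).
        finite F \<Longrightarrow> (\<forall>r<t. (r, xs r) \<in> F) \<Longrightarrow>
        measure M {\<omega> \<in> space M. (\<forall>p\<in>F. \<xi> \<omega> (fst p) (snd p) = \<sigma> p) \<and> (\<forall>r\<le>t. X \<omega> r = xs r)}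
        = (if xs 0 = x0 then 1 else 0) * (\<Prod>p\<in>F. pmf \<pi> (\<sigma> p))
          * (\<Prod>r<t. P0 (xs (Suc r) - xs r) + c (xs (Suc r) - xs r) (\<sigma> (r, xs r)))"
begin

declare \<xi>_meas[measurable] X_meas[measurable]

definition K where "K u s = P0 u + c u s"
definition Pb where "Pb = Pbar \<pi> P0 c"

lemma Pb_eq: "Pb u = (\<Sum>s\<in>UNIV. pmf \<pi> s * K u s)"
proof -
  have "(\<Sum>s\<in>UNIV. pmf \<pi> s * K u s) = P0 u * (\<Sum>s\<in>UNIV. pmf \<pi> s) + (\<Sum>s\<in>UNIV. pmf \<pi> s * c u s)"
    by (simp add: K_def algebra_simps sum.distrib sum_distrib_left)
  also have "(\<Sum>s\<in>UNIV. pmf \<pi> s) = 1" by (simp add: sum_pmf_eq_1)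
  finally show ?thesis by (simp add: Pb_def Pbar_def)
qed

lemma G_aux:
  "\<forall>k \<sigma>. t - k = m \<longrightarrow> k \<le> t \<longrightarrow>
    measure M {\<omega>\<in>space M. (\<forall>r<k. \<xi> \<omega> r (xs r) = \<sigma> (r, xs r)) \<and> (\<forall>r\<le>t. X \<omega> r = xs r)}
    = (if xs 0 = x0 then 1 else 0) * (\<Prod>r<k. pmf \<pi> (\<sigma> (r, xs r)))
      * (\<Prod>r<k. K (xs (Suc r) - xs r) (\<sigma> (r, xs r))) * (\<Prod>r\<in>{k..<t}. Pb (xs (Suc r) - xs r))"
proof (induction m)
  case 0
  show ?case
  proof (intro allI impI)
    fix k \<sigma> assume "t - k = 0" "k \<le> t"
    then have kt: "k = t" by simp
    let ?F = "(\<lambda>r. (r, xs r)) ` {..<t}"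
    have inj: "inj_on (\<lambda>r. (r, xs r)) {..<t}" by (auto simp: inj_on_def)
    have "measure M {\<omega>\<in>space M. (\<forall>p\<in>?F. \<xi> \<omega> (fst p) (snd p) = \<sigma> p) \<and> (\<forall>r\<le>t. X \<omega> r = xs r)}
       = (if xs 0 = x0 then 1 else 0) * (\<Prod>p\<in>?F. pmf \<pi> (\<sigma> p))
          * (\<Prod>r<t. P0 (xs (Suc r) - xs r) + c (xs (Suc r) - xs r) (\<sigma> (r, xs r)))"
      by (rule annealed_law) auto
    moreover have "{\<omega>\<in>space M. (\<forall>p\<in>?F. \<xi> \<omega> (fst p) (snd p) = \<sigma> p) \<and> (\<forall>r\<le>t. X \<omega> r = xs r)}
       = {\<omega>\<in>space M. (\<forall>r<t. \<xi> \<omega> r (xs r) = \<sigma> (r, xs r)) \<and> (\<forall>r\<le>t. X \<omega> r = xs r)}"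
      by auto
    moreover have "(\<Prod>p\<in>?F. pmf \<pi> (\<sigma> p)) = (\<Prod>r<t. pmf \<pi> (\<sigma> (r, xs r)))"
      by (subst prod.reindex[OF inj]) simp
    ultimately show "measure M {\<omega>\<in>space M. (\<forall>r<k. \<xi> \<omega> r (xs r) = \<sigma> (r, xs r)) \<and> (\<forall>r\<le>t. X \<omega> r = xs r)}
    = (if xs 0 = x0 then 1 else 0) * (\<Prod>r<k. pmf \<pi> (\<sigma> (r, xs r)))
      * (\<Prod>r<k. K (xs (Suc r) - xs r) (\<sigma> (r, xs r))) * (\<Prod>r\<in>{k..<t}. Pb (xs (Suc r) - xs r))"
      using kt by (simp add: K_def)
  qed
next
  case (Suc m)
  show ?case
  proof (intro allI impI)
    fix k \<sigma> assume km: "t - k = Suc m" "k \<le> t"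
    then have kt: "k < t" and km': "t - Suc k = m" by auto
    define E where "E = {\<omega>\<in>space M. (\<forall>r<k. \<xi> \<omega> r (xs r) = \<sigma> (r, xs r)) \<and> (\<forall>r\<le>t. X \<omega> r = xs r)}"
    define \<sigma>' where "\<sigma>' s = \<sigma>((k, xs k) := s)" for s
    define E' where "E' s = {\<omega>\<in>space M. (\<forall>r<Suc k. \<xi> \<omega> r (xs r) = \<sigma>' s (r, xs r)) \<and> (\<forall>r\<le>t. X \<omega> r = xs r)}" for s
    have E'_eq: "E' s = {\<omega>\<in>E. \<xi> \<omega> k (xs k) = s}" for s
      unfolding E'_def E_def \<sigma>'_def by (auto simp: less_Suc_eq)
    have Eu: "E = (\<Union>s\<in>UNIV. E' s)" unfolding E'_eq by auto
    then have "measure M E = (\<Sum>s\<in>UNIV. measure M (E' s))"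
    proof -
      have m: "E' s \<in> events" for s unfolding E'_def by measurable
      have d: "disjoint_family_on E' UNIV" by (auto simp: disjoint_family_on_def E'_eq)
      show ?thesis using finite_measure_finite_Union[of UNIV E'] m d Eu by auto
    qed
    also have "\<dots> = (\<Sum>s\<in>UNIV. (if xs 0 = x0 then 1 else 0) * (\<Prod>r<k. pmf \<pi> (\<sigma> (r, xs r)))
      * (\<Prod>r<k. K (xs (Suc r) - xs r) (\<sigma> (r, xs r))) * (pmf \<pi> s * K (xs (Suc k) - xs k) s) * (\<Prod>r\<in>{Suc k..<t}. Pb (xs (Suc r) - xs r)))"
    proof (rule sum.cong[OF refl])
      fix s
      have h: "\<And>r. r < k \<Longrightarrow> \<sigma>' s (r, xs r) = \<sigma> (r, xs r)" by (simp add: \<sigma>'_def)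
      have "measure M (E' s) = (if xs 0 = x0 then 1 else 0) * (\<Prod>r<Suc k. pmf \<pi> (\<sigma>' s (r, xs r)))
      * (\<Prod>r<Suc k. K (xs (Suc r) - xs r) (\<sigma>' s (r, xs r))) * (\<Prod>r\<in>{Suc k..<t}. Pb (xs (Suc r) - xs r))"
        unfolding E'_def using Suc.IH km' kt by simp
      also have "\<dots> = (if xs 0 = x0 then 1 else 0) * (\<Prod>r<k. pmf \<pi> (\<sigma> (r, xs r)))
      * (\<Prod>r<k. K (xs (Suc r) - xs r) (\<sigma> (r, xs r))) * (pmf \<pi> s * K (xs (Suc k) - xs k) s) * (\<Prod>r\<in>{Suc k..<t}. Pb (xs (Suc r) - xs r))"
      proof -
        have a: "(\<Prod>r<k. pmf \<pi> (\<sigma>' s (r, xs r))) = (\<Prod>r<k. pmf \<pi> (\<sigma> (r, xs r)))"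
          by (rule prod.cong) (auto simp: h)
        have b: "(\<Prod>r<k. K (xs (Suc r) - xs r) (\<sigma>' s (r, xs r))) = (\<Prod>r<k. K (xs (Suc r) - xs r) (\<sigma> (r, xs r)))"
          by (rule prod.cong) (auto simp: h)
        show ?thesis by (simp add: a b \<sigma>'_def mult_ac)
      qed
      finally show "measure M (E' s) = \<dots>" .
    qed
    also have "\<dots> = (if xs 0 = x0 then 1 else 0) * (\<Prod>r<k. pmf \<pi> (\<sigma> (r, xs r)))
      * (\<Prod>r<k. K (xs (Suc r) - xs r) (\<sigma> (r, xs r))) * Pb (xs (Suc k) - xs k) * (\<Prod>r\<in>{Suc k..<t}. Pb (xs (Suc r) - xs r))"
      by (simp add: Pb_eq sum_distrib_left sum_distrib_right mult_ac)
    also have "\<dots> = (if xs 0 = x0 then 1 else 0) * (\<Prod>r<k. pmf \<pi> (\<sigma> (r, xs r)))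
      * (\<Prod>r<k. K (xs (Suc r) - xs r) (\<sigma> (r, xs r))) * (\<Prod>r\<in>{k..<t}. Pb (xs (Suc r) - xs r))"
      using kt by (simp add: prod.atLeast_Suc_lessThan mult_ac)
    finally show "measure M {\<omega>\<in>space M. (\<forall>r<k. \<xi> \<omega> r (xs r) = \<sigma> (r, xs r)) \<and> (\<forall>r\<le>t. X \<omega> r = xs r)}
    = (if xs 0 = x0 then 1 else 0) * (\<Prod>r<k. pmf \<pi> (\<sigma> (r, xs r)))
      * (\<Prod>r<k. K (xs (Suc r) - xs r) (\<sigma> (r, xs r))) * (\<Prod>r\<in>{k..<t}. Pb (xs (Suc r) - xs r))"
      unfolding E_def .
  qed
qed

lemma path_law:
  "measure M {\<omega>\<in>space M. \<forall>r\<le>t. X \<omega> r = xs r}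
    = (if xs 0 = x0 then 1 else 0) * (\<Prod>r<t. Pb (xs (Suc r) - xs r))"
  using G_aux[of t t xs, rule_format, of 0 "\<lambda>_. undefined"] by (simp add: atLeast0LessThan)


definition D where "D r \<omega> = X \<omega> (Suc r) - X \<omega> r"

lemma D_meas[measurable]: "D r \<in> measurable M (count_space UNIV)"
proof -
  have "(\<lambda>\<omega>. (\<lambda>a \<omega>. X \<omega> (Suc r) - a) (X \<omega> r) \<omega>) \<in> measurable M (count_space UNIV)"
    by (rule measurable_compose_countable[OF _ X_meas])
       (rule measurable_compose[OF X_meas], simp)
  then show ?thesis unfolding D_def[abs_def] by simp
qed

lemma X0_AE: "AE \<omega> in M. X \<omega> 0 = x0"
proof -
  have "prob {\<omega>\<in>space M. X \<omega> 0 = x0} = 1"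
    using path_law[of 0 "\<lambda>_. x0"] by simp
  from AE_prob_1[OF this] show ?thesis by auto
qed

lemma path_iff:
  assumes "X \<omega> 0 = x0"
  shows "(\<forall>r<t. D r \<omega> = us r) \<longleftrightarrow> (\<forall>r\<le>t. X \<omega> r = x0 + (\<Sum>q<r. us q))"
proof (induction t)
  case 0 then show ?case using assms by simp
next
  case (Suc t)
  show ?case
  proof
    assume h: "\<forall>r<Suc t. D r \<omega> = us r"
    then have "\<forall>r\<le>t. X \<omega> r = x0 + (\<Sum>q<r. us q)" using Suc by auto
    moreover have "D t \<omega> = us t" using h by auto
    ultimately have "X \<omega> (Suc t) = x0 + (\<Sum>q<Suc t. us q)" by (simp add: D_def algebra_simps)
    with \<open>\<forall>r\<le>t. _\<close> show "\<forall>r\<le>Suc t. X \<omega> r = x0 + (\<Sum>q<r. us q)" by (auto simp: le_Suc_eq)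
  next
    assume h: "\<forall>r\<le>Suc t. X \<omega> r = x0 + (\<Sum>q<r. us q)"
    then have "\<forall>r<t. D r \<omega> = us r" using Suc by auto
    moreover have "D t \<omega> = us t" using h[rule_format, of t] h[rule_format, of "Suc t"] by (simp add: D_def)
    ultimately show "\<forall>r<Suc t. D r \<omega> = us r" by (auto simp: less_Suc_eq)
  qed
qed

lemma incr_law: "prob {\<omega>\<in>space M. \<forall>r<t. D r \<omega> = us r} = (\<Prod>r<t. Pb (us r))"
proof -
  define p where "p r = x0 + (\<Sum>q<r. us q)" for r
  have "prob {\<omega>\<in>space M. \<forall>r<t. D r \<omega> = us r} = prob {\<omega>\<in>space M. \<forall>r\<le>t. X \<omega> r = p r}"
    by (rule finite_measure_eq_AE) (use X0_AE path_iff in \<open>auto simp: p_def\<close>)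
  also have "\<dots> = (\<Prod>r<t. Pb (p (Suc r) - p r))" by (simp add: path_law p_def)
  also have "\<dots> = (\<Prod>r<t. Pb (us r))" by (simp add: p_def)
  finally show ?thesis .
qed

lemma Pb_nonneg: "Pb u \<ge> 0"
  unfolding Pb_eq K_def using kernel_bounds by (intro sum_nonneg mult_nonneg_nonneg) auto

lemma Pb_supp: "u \<notin> R \<Longrightarrow> Pb u = 0"
  by (simp add: Pb_def Pbar_def P0_supp c_supp)

definition Q where "Q B = (\<Sum>u\<in>B \<inter> R. Pb u)"

lemma Q_UNIV: "Q UNIV = 1"
proof -
  have "Q UNIV = (\<Sum>u\<in>R. P0 u) + (\<Sum>s\<in>UNIV. pmf \<pi> s * (\<Sum>u\<in>R. c u s))"
    by (simp add: Q_def Pb_def Pbar_def sum.distrib sum_distrib_left) (rule sum.swap)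
  then show ?thesis by (simp add: P0_sum c_sum)
qed

lemma Q_law: "prob {\<omega>\<in>space M. \<forall>r<t. D r \<omega> \<in> A r} = (\<Prod>r<t. Q (A r))"
proof -
  define I where "I = PiE {..<t} A"
  define Xs where "Xs us = {\<omega>\<in>space M. \<forall>r<t. D r \<omega> = us r}" for us
  have cI: "countable I" unfolding I_def by (rule countable_PiE) auto
  have U: "{\<omega>\<in>space M. \<forall>r<t. D r \<omega> \<in> A r} = \<Union>(Xs ` I)"
  proof safe
    fix \<omega> assume "\<omega> \<in> space M" "\<forall>r<t. D r \<omega> \<in> A r"
    then show "\<omega> \<in> \<Union>(Xs ` I)"
      by (intro UN_I[of "restrict (\<lambda>r. D r \<omega>) {..<t}"]) (auto simp: I_def Xs_def)
  qed (auto simp: I_def Xs_def)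
  have disj: "disjoint_family_on Xs I"
    unfolding disjoint_family_on_def I_def Xs_def
  proof (intro ballI impI)
    fix a b assume "a \<in> PiE {..<t} A" "b \<in> PiE {..<t} A" "a \<noteq> b"
    then obtain r where "r < t" "a r \<noteq> b r" by (metis PiE_ext lessThan_iff)
    then show "{\<omega> \<in> space M. \<forall>r<t. D r \<omega> = a r} \<inter> {\<omega> \<in> space M. \<forall>r<t. D r \<omega> = b r} = {}"
      by auto
  qed
  have ms: "Xs us \<in> events" for us unfolding Xs_def by measurable
  have "emeasure M {\<omega>\<in>space M. \<forall>r<t. D r \<omega> \<in> A r} = (\<integral>\<^sup>+us. emeasure M (Xs us) \<partial>count_space I)"
    unfolding U by (rule emeasure_UN_countable[OF ms cI disj])
  also have "\<dots> = (\<integral>\<^sup>+us. ennreal (\<Prod>r<t. Pb (us r)) \<partial>count_space I)"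
    by (simp add: emeasure_eq_measure Xs_def incr_law)
  also have "\<dots> = (\<Sum>us\<in>PiE {..<t} (\<lambda>r. A r \<inter> R). ennreal (\<Prod>r<t. Pb (us r)))"
  proof (rule nn_integral_count_space')
    show "finite (PiE {..<t} (\<lambda>r. A r \<inter> R))" using R_fin by (intro finite_PiE) auto
    show "PiE {..<t} (\<lambda>r. A r \<inter> R) \<subseteq> I" unfolding I_def by (auto simp: PiE_iff)
    fix us assume "us \<in> I" "us \<notin> PiE {..<t} (\<lambda>r. A r \<inter> R)"
    then obtain r where "r < t" "us r \<notin> R" unfolding I_def by (auto simp: PiE_iff)
    then have "(\<Prod>r<t. Pb (us r)) = 0"
      by (intro prod_zero) (auto simp: Pb_supp intro!: bexI[of _ r])
    then show "ennreal (\<Prod>r<t. Pb (us r)) = 0" by (simp only: ennreal_0)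
  qed
  also have "\<dots> = ennreal (\<Sum>us\<in>PiE {..<t} (\<lambda>r. A r \<inter> R). \<Prod>r<t. Pb (us r))"
    by (rule sum_ennreal) (simp add: prod_nonneg Pb_nonneg)
  also have "(\<Sum>us\<in>PiE {..<t} (\<lambda>r. A r \<inter> R). \<Prod>r<t. Pb (us r)) = (\<Prod>r<t. Q (A r))"
    unfolding Q_def using R_fin by (subst prod_sum_PiE) auto
  finally show ?thesis
    by (simp add: emeasure_eq_measure Q_def sum_nonneg Pb_nonneg prod_nonneg)
qed


lemma D_marg: "prob {\<omega>\<in>space M. D j \<omega> \<in> B} = Q B"
proof -
  have "{\<omega>\<in>space M. D j \<omega> \<in> B} = {\<omega>\<in>space M. \<forall>r<Suc j. D r \<omega> \<in> (if r = j then B else UNIV)}"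
    by auto
  also have "prob \<dots> = (\<Prod>r<Suc j. Q (if r = j then B else UNIV))" by (rule Q_law)
  also have "\<dots> = Q B" by (simp add: Q_UNIV)
  finally show ?thesis .
qed

lemma D_indep:
  assumes "0 < t"
  shows "indep_vars (\<lambda>_. count_space UNIV) D {..<t}"
proof -
  have eq: "indep_vars (\<lambda>_. count_space UNIV) D {..<t} \<longleftrightarrow>
    (\<forall>A\<in>(\<Pi> i\<in>{..<t}. sets (count_space UNIV)). prob (\<Inter>j\<in>{..<t}. D j -` A j \<inter> space M) = (\<Prod>j\<in>{..<t}. prob (D j -` A j \<inter> space M)))"
    by (rule indep_vars_finite) (use assms in \<open>auto simp: Int_stable_def sets.sigma_sets_eq\<close>)
  show ?thesis unfolding eq
  proof (intro ballI)
  fix A :: "nat \<Rightarrow> (int ^ 'n) set" assume A: "A \<in> (\<Pi> i\<in>{..<t}. sets (count_space UNIV))"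
  have "(\<Inter>j\<in>{..<t}. D j -` A j \<inter> space M) = {\<omega>\<in>space M. \<forall>r<t. D r \<omega> \<in> A r}"
    using assms by auto
  then have "prob (\<Inter>j\<in>{..<t}. D j -` A j \<inter> space M) = (\<Prod>r<t. Q (A r))"
    by (simp add: Q_law)
  also have "\<dots> = (\<Prod>j<t. prob (D j -` A j \<inter> space M))"
  proof (rule prod.cong[OF refl])
    fix j
    have "D j -` A j \<inter> space M = {\<omega>\<in>space M. D j \<omega> \<in> A j}" by auto
    then show "Q (A j) = prob (D j -` A j \<inter> space M)" by (simp add: D_marg)
  qed
  finally show "prob (\<Inter>j\<in>{..<t}. D j -` A j \<inter> space M) = (\<Prod>j\<in>{..<t}. prob (D j -` A j \<inter> space M))" .
  qed
qed

lemma R_ne: "R \<noteq> {}" using P0_sum by auto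

lemma AE_R: "AE \<omega> in M. \<forall>r. D r \<omega> \<in> R"
proof (subst AE_all_countable, intro allI)
  fix r
  have "prob {\<omega>\<in>space M. D r \<omega> \<in> R} = 1"
    using D_marg[of r R] Q_UNIV by (simp add: Q_def)
  from AE_prob_1[OF this] show "AE \<omega> in M. D r \<omega> \<in> R" by auto
qed

lemma expect_f: "expectation (\<lambda>\<omega>. f (D r \<omega>)) = (\<Sum>u\<in>R. f u * Pb u)"
proof -
  have mf: "(\<lambda>\<omega>. f (D r \<omega>)) \<in> borel_measurable M"
    by (rule measurable_compose[OF D_meas]) simp
  have ev: "\<And>u. {\<omega>\<in>space M. D r \<omega> = u} \<in> events" by measurable
  have "expectation (\<lambda>\<omega>. f (D r \<omega>)) = expectation (\<lambda>\<omega>. \<Sum>u\<in>R. f u * indicator {\<omega>\<in>space M. D r \<omega> = u} \<omega>)"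
  proof (rule integral_cong_AE)
    show "(\<lambda>\<omega>. \<Sum>u\<in>R. f u * indicator {\<omega>\<in>space M. D r \<omega> = u} \<omega>) \<in> borel_measurable M"
      using ev by (intro borel_measurable_sum borel_measurable_times borel_measurable_const borel_measurable_indicator) 
    show "AE \<omega> in M. f (D r \<omega>) = (\<Sum>u\<in>R. f u * indicator {\<omega>\<in>space M. D r \<omega> = u} \<omega>)"
      using AE_R AE_space
    proof eventually_elim
      case (elim \<omega>)
      then have "(\<Sum>u\<in>R. f u * indicator {\<omega>\<in>space M. D r \<omega> = u} \<omega>) = (\<Sum>u\<in>R. if u = D r \<omega> then f u else 0)"
        by (intro sum.cong) (auto simp: indicator_def)
      also have "\<dots> = f (D r \<omega>)" using elim R_fin by (simp add: sum.delta')
      finally show ?case by simp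
    qed
  qed (rule mf)
  also have "\<dots> = (\<Sum>u\<in>R. f u * prob {\<omega>\<in>space M. D r \<omega> = u})"
  proof -
    have "expectation (\<lambda>\<omega>. \<Sum>u\<in>R. f u * indicator {\<omega>\<in>space M. D r \<omega> = u} \<omega>)
      = (\<Sum>u\<in>R. expectation (\<lambda>\<omega>. f u * indicator {\<omega>\<in>space M. D r \<omega> = u} \<omega>))"
      by (rule Bochner_Integration.integral_sum) (intro integrable_mult_right integrable_real_indicator ev, simp add: less_top[symmetric])
    then show ?thesis by (simp add: Int_absorb2)
  qed
  also have "\<dots> = (\<Sum>u\<in>R. f u * Pb u)"
  proof (rule sum.cong[OF refl])
    fix u assume "u \<in> R"
    have "prob {\<omega>\<in>space M. D r \<omega> = u} = Q {u}" using D_marg[of r "{u}"] by simp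
    then show "f u * prob {\<omega>\<in>space M. D r \<omega> = u} = f u * Pb u" using \<open>u \<in> R\<close> by (simp add: Q_def)
  qed
  finally show ?thesis .
qed


lemma aux_alg: "(d::real) > 0 \<Longrightarrow> t > 0 \<Longrightarrow> -2*(t*e)^2/(t*d) = t*(-(2*1/d)*e^2)"
  by (simp add: field_simps power2_eq_square)

lemma slln: "AE \<omega> in M. (\<lambda>t. (\<Sum>r<t. f (D r \<omega>)) / real t) \<longlonglongrightarrow> (\<Sum>u\<in>R. f u * Pb u)"
proof -
  define m where "m = (\<Sum>u\<in>R. f u * Pb u)"
  define a where "a = Min (f ` R) - 1"
  define b where "b = Max (f ` R) + 1"
  obtain u0 where u0: "u0 \<in> R" using R_ne by auto
  have ab: "a < b"
  proof -
    have "Min (f ` R) \<le> f u0" using u0 R_fin by simp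
    moreover have "f u0 \<le> Max (f ` R)" using u0 R_fin by simp
    ultimately show ?thesis by (simp add: a_def b_def)
  qed
  define C where "C = 2 * (1::real) / (b-a)^2"
  have Cpos: "C > 0" using ab by (simp add: C_def)
  have AEab: "AE \<omega> in M. f (D r \<omega>) \<in> {a..b}" for r
    using AE_R
  proof eventually_elim
    case (elim \<omega>)
    then have "D r \<omega> \<in> R" by auto
    then have "Min (f ` R) \<le> f (D r \<omega>)" "f (D r \<omega>) \<le> Max (f ` R)" using R_fin by auto
    then show ?case by (simp add: a_def b_def)
  qed
  have hoeff: "prob {\<omega>\<in>space M. real t * \<epsilon> \<le> \<bar>(\<Sum>r<t. f (D r \<omega>)) - real t * m\<bar>} \<le> 2 * exp (- C * \<epsilon>^2) ^ t"
    if t: "0 < t" and e: "0 < \<epsilon>" for t \<epsilon>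
  proof -
    interpret H: Hoeffding_ineq M "{..<t}" "\<lambda>r \<omega>. f (D r \<omega>)" "\<lambda>_. a" "\<lambda>_. b" "real t * m"
    proof unfold_locales
      show "indep_vars (\<lambda>_. borel) (\<lambda>r \<omega>. f (D r \<omega>)) {..<t}"
        by (rule indep_vars_compose2[OF D_indep[OF t]]) simp
    qed (use AEab in \<open>auto simp: expect_f m_def\<close>)
    have "prob {\<omega>\<in>space M. \<bar>(\<Sum>i<t. f (D i \<omega>)) - real t * m\<bar> \<ge> real t * \<epsilon>}
       \<le> 2 * exp (-2 * (real t * \<epsilon>)\<^sup>2 / (\<Sum>i<t. (b - a)\<^sup>2))"
      by (rule H.Hoeffding_ineq_abs_ge) (use t e ab in auto)
    also have "-2 * (real t * \<epsilon>)\<^sup>2 / (\<Sum>i<t. (b - a)\<^sup>2) = real t * (- C * \<epsilon>^2)"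
    proof -
      have s: "(\<Sum>i<t. (b - a)\<^sup>2) = real t * (b-a)^2" by simp
      have d: "(b-a)^2 > 0" using ab by simp
      show ?thesis unfolding s C_def using t d by (intro aux_alg) auto
    qed
    also have "exp (real t * (- C * \<epsilon>^2)) = exp (- C * \<epsilon>^2) ^ t" by (rule exp_of_nat_mult)
    finally show ?thesis .
  qed
  define e where "e k = 1 / real (Suc k)" for k
  define A where "A k t = {\<omega>\<in>space M. real t * e k \<le> \<bar>(\<Sum>r<t. f (D r \<omega>)) - real t * m\<bar>}" for k t
  have Ameas: "A k t \<in> events" for k t
  proof -
    have "(\<lambda>\<omega>. f (D r \<omega>)) \<in> borel_measurable M" for r
      by (rule measurable_compose[OF D_meas]) simp
    then show ?thesis unfolding A_def by measurable
  qed
  have BC: "AE \<omega> in M. eventually (\<lambda>t. \<omega> \<in> space M - A k t) sequentially" for k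
  proof (rule borel_cantelli_AE1[OF Ameas])
    show "emeasure M (A k t) < \<infinity>" for t by (simp add: less_top[symmetric])
    have ek: "e k > 0" by (simp add: e_def)
    have q: "norm (exp (- C * e k ^ 2)) < 1" using Cpos ek by simp
    show "summable (\<lambda>t. measure M (A k t))"
    proof (rule summable_comparison_test'[where N=1])
      show "summable (\<lambda>t. 2 * exp (- C * e k ^ 2) ^ t)"
        by (rule summable_mult) (rule summable_geometric[OF q])
      fix t :: nat assume "1 \<le> t"
      then show "norm (measure M (A k t)) \<le> 2 * exp (- C * e k ^ 2) ^ t"
        unfolding A_def using hoeff[of t "e k"] ek by simp
    qed
  qed
  have "AE \<omega> in M. \<forall>k. eventually (\<lambda>t. \<omega> \<in> space M - A k t) sequentially"
    by (subst AE_all_countable) (use BC in auto)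
  then show ?thesis
  proof eventually_elim
    case (elim \<omega>)
    show ?case unfolding m_def[symmetric]
    proof (rule LIMSEQ_I)
      fix r :: real assume "0 < r"
      then obtain n :: nat where n: "0 < n" "inverse (real n) < r" using ex_inverse_of_nat_less by blast
      from elim[rule_format, of "n - 1"] obtain N where N: "\<And>t. t \<ge> N \<Longrightarrow> \<omega> \<in> space M - A (n - 1) t"
        by (auto simp: eventually_sequentially)
      show "\<exists>no. \<forall>t\<ge>no. norm ((\<Sum>r<t. f (D r \<omega>)) / real t - m) < r"
      proof (intro exI allI impI)
        fix t assume t: "max N 1 \<le> t"
        then have "\<omega> \<in> space M - A (n - 1) t" using N by force
        then have "\<bar>(\<Sum>r<t. f (D r \<omega>)) - real t * m\<bar> < real t * (1 / real n)"
          using n by (auto simp: A_def e_def)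
        moreover have "(\<Sum>r<t. f (D r \<omega>)) / real t - m = ((\<Sum>r<t. f (D r \<omega>)) - real t * m) / real t"
          using t by (simp add: field_simps)
        ultimately have "norm ((\<Sum>r<t. f (D r \<omega>)) / real t - m) < 1 / real n"
          using t by (simp add: divide_less_eq abs_divide mult.commute)
        then show "norm ((\<Sum>r<t. f (D r \<omega>)) / real t - m) < r" using n by (simp add: inverse_eq_divide)
      qed
    qed
  qed
qed


lemma main:
  fixes b :: "real ^ 'n"
  shows "AE \<omega> in M. (\<lambda>t. (1 / real t) *\<^sub>R quad_var (\<lambda>r. rvec (X \<omega> r) - real r *\<^sub>R b) t)
    \<longlonglongrightarrow> eta2 R (Pbar \<pi> P0 c) b"
proof -
  define f where "f i j u = (rvec u $ i - b $ i) * (rvec u $ j - b $ j)" for i j u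
  have "AE \<omega> in M. \<forall>i j. (\<lambda>t. (\<Sum>r<t. f i j (D r \<omega>)) / real t) \<longlonglongrightarrow> (\<Sum>u\<in>R. f i j u * Pb u)"
    by (subst AE_all_countable, intro allI, subst AE_all_countable, intro allI) (rule slln)
  then show ?thesis
  proof eventually_elim
    case (elim \<omega>)
    have comp: "((1 / real t) *\<^sub>R quad_var (\<lambda>r. rvec (X \<omega> r) - real r *\<^sub>R b) t) $ i $ j
       = (\<Sum>r<t. f i j (D r \<omega>)) / real t" for t i j
    proof -
      have "rvec (X \<omega> (Suc r)) $ i - real (Suc r) * b $ i - (rvec (X \<omega> r) $ i - real r * b $ i)
          = rvec (D r \<omega>) $ i - b $ i" for r i
        by (simp add: rvec_def D_def algebra_simps)
      then show ?thesis by (simp add: quad_var_def f_def)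
    qed
    have lim: "eta2 R (Pbar \<pi> P0 c) b $ i $ j = (\<Sum>u\<in>R. f i j u * Pb u)" for i j
      by (simp add: eta2_def f_def Pb_def)
    show ?case
      by (intro vec_tendstoI) (simp only: comp lim elim)
  qed
qed

end

theorem corollary3p4:
  fixes \<pi> :: "'s::finite pmf"
    and P0 :: "int ^ 'n \<Rightarrow> real"
    and c :: "int ^ 'n \<Rightarrow> 's \<Rightarrow> real"
    and R :: "(int ^ 'n) set"
    and bc :: "real ^ 'n"
    and x0 :: "int ^ 'n"
    and M :: "'w measure"
    and \<xi> :: "'w \<Rightarrow> nat \<Rightarrow> int ^ 'n \<Rightarrow> 's"
    and X :: "'w \<Rightarrow> nat \<Rightarrow> int ^ 'n"
  assumes R_fin: "finite R"
    and P0_supp: "\<And>u. u \<notin> R \<Longrightarrow> P0 u = 0"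
    and c_supp: "\<And>u s. u \<notin> R \<Longrightarrow> c u s = 0"
    and P0_nonneg: "\<And>u. P0 u \<ge> 0"
    and P0_sum: "(\<Sum>u\<in>R. P0 u) = 1"
    and kernel_bounds: "\<And>u s. 0 \<le> P0 u + c u s \<and> P0 u + c u s \<le> 1"
    and c_sum: "\<And>s. (\<Sum>u\<in>R. c u s) = 0"
    and c_mean: "\<And>u. (\<Sum>s\<in>UNIV. c u s * pmf \<pi> s) = 0"
    and c_drift: "\<And>s. (\<Sum>u\<in>R. c u s *\<^sub>R rvec u) = bc"
    and M_prob: "prob_space M"
    and \<xi>_meas: "\<And>t x. (\<lambda>\<omega>. \<xi> \<omega> t x) \<in> measurable M (count_space UNIV)"
    and X_meas: "\<And>t. (\<lambda>\<omega>. X \<omega> t) \<in> measurable M (count_space UNIV)"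
    and annealed_law:
      "\<And>(F :: (nat \<times> (int ^ 'n)) set) (\<sigma> :: nat \<times> (int ^ 'n) \<Rightarrow> 's) (t :: nat) (xs :: nat \<Rightarrow> int ^ 'n).
        finite F \<Longrightarrow> (\<forall>r<t. (r, xs r) \<in> F) \<Longrightarrow>
        measure M {\<omega> \<in> space M. (\<forall>p\<in>F. \<xi> \<omega> (fst p) (snd p) = \<sigma> p) \<and> (\<forall>r\<le>t. X \<omega> r = xs r)}
        = (if xs 0 = x0 then 1 else 0) * (\<Prod>p\<in>F. pmf \<pi> (\<sigma> p))
          * (\<Prod>r<t. P0 (xs (Suc r) - xs r) + c (xs (Suc r) - xs r) (\<sigma> (r, xs r)))"
  shows "AE \<omega> in M.
    (\<lambda>t. (1 / real t) *\<^sub>R quad_var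
            (\<lambda>r. rvec (X \<omega> r) - real r *\<^sub>R ((\<Sum>u\<in>R. P0 u *\<^sub>R rvec u) + bc)) t)
    \<longlonglongrightarrow> eta2 R (Pbar \<pi> P0 c) ((\<Sum>u\<in>R. P0 u *\<^sub>R rvec u) + bc)"
  proof -
  interpret walk M \<pi> P0 c R bc x0 \<xi> X
    by (rule walk.intro[OF M_prob], rule walk_axioms.intro) (fact assms)+
  show ?thesis by (rule main)
qed

end
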